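(* Let $i\in\mathbb Z^{\geq 0}$ and $j\in\mathbb Z$. Then $$R_{i,j}=R_{i+1,F(i+1)+j}\cup R_{i+2,j},$$ and the union is disjoint.
   Context: $\varphi=\frac{1+\sqrt5}{2}$ is the golden ratio; $a(n)=\lfloor n\varphi\rfloor$ and $b(n)=\lfloor n\varphi^2\rfloor$ for $n\in\mathbb N=\{1,2,\dots\}$ are the lower and upper Wythoff sequences. $F$ is the Fibonacci sequence with $F(0)=0$, $F(1)=F(2)=1$, $F(n)=F(n-1)+F(n-2)$. For $i\in\mathbb Z^{\geq 0}$ and $j\in\mathbb Z$, the sequence $f_{i,j}$ is defined by $f_{i,j}(n)=F(i+1)a(n)+F(i)n-j$ for $n\in\mathbb N$, and $R_{i,j}=\{f_{i,j}(n)\mid n\in\mathbb N\}$ is its range. *)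

theory Defs
  imports Complex_Main "HOL-Number_Theory.Fib"
begin

definition phi :: real where "phi = (1 + sqrt 5) / 2"

definition wa :: "nat \<Rightarrow> int" where "wa n = \<lfloor>real n * phi\<rfloor>"

definition f_ij :: "nat \<Rightarrow> int \<Rightarrow> nat \<Rightarrow> int" where
  "f_ij i j n = int (fib (i + 1)) * wa n + int (fib i) * int n - j"

definition R_ij :: "nat \<Rightarrow> int \<Rightarrow> int set" where
  "R_ij i j = f_ij i j ` {1..}"

end

theory Submission
  imports Defs
begin

lemma phi_sq: "phi^2 = phi + 1"
  by (simp add: phi_def power2_eq_square field_simps)

lemma phi_gt1: "phi > 1" and phi_lt2: "phi < 2"
proof -
  have "sqrt 5 > 1" by (simp add: real_less_rsqrt)
  moreover have "sqrt 5 < 3" by (simp add: real_sqrt_less_iff real_less_lsqrt)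
  ultimately show "phi > 1" "phi < 2" by (auto simp: phi_def)
qed

lemma int_eq_nosol:
  fixes m n :: int
  assumes "m^2 = m*n + n^2" shows "n = 0"
proof (rule ccontr)
  assume n0: "n \<noteq> 0"
  define g where "g = gcd m n"
  have g0: "g \<noteq> 0" using n0 by (simp add: g_def)
  obtain m' n' where mn: "m = g*m'" "n = g*n'" "coprime m' n'"
    using gcd_coprime_exists[of m n] n0 unfolding g_def by (auto simp: mult.commute)
  have "g^2 * (m'^2) = g^2 * (m'*n' + n'^2)" using assms mn by (simp add: algebra_simps power2_eq_square)
  hence e: "m'^2 = m'*n' + n'^2" using g0 by simp
  have "n' dvd m'^2" using e by (metis dvd_add_right_iff dvd_mult power2_eq_square dvd_refl dvd_triv_right)
  hence u1: "is_unit n'" using mn(3) by (metis coprime_commute coprime_dvd_mult_left_iff coprime_power_right_iff dvd_refl coprime_common_divisor coprime_imp_coprime)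
  have "m' dvd n'^2" using e by (metis dvd_add_right_iff dvd_mult power2_eq_square dvd_refl dvd_triv_left)
  hence u2: "is_unit m'" using mn(3) by (metis coprime_dvd_mult_left_iff coprime_power_right_iff dvd_refl coprime_common_divisor)
  from u1 u2 have "n' = 1 \<or> n' = -1" "m' = 1 \<or> m' = -1" by (auto simp: abs_if split: if_splits)
  thus False using e by auto
qed

lemma irr: fixes n m :: int assumes "n \<noteq> 0" shows "of_int n * phi \<noteq> of_int m"
proof
  assume h: "of_int n * phi = of_int m"
  have "(of_int m::real)^2 = of_int n ^2 * phi^2" using h by (simp add: power_mult_distrib[symmetric])
  also have "\<dots> = of_int n * (of_int n * phi) + of_int n ^ 2" using phi_sq by (simp add: algebra_simps power2_eq_square)
  also have "\<dots> = of_int (m*n + n^2)" using h by (simp add: algebra_simps)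
  finally have "m^2 = m*n + n^2" by (metis of_int_eq_iff of_int_power)
  thus False using int_eq_nosol assms by blast
qed


lemma pp: "phi * (phi * x) = x + phi * x"
proof -
  have "phi * (phi * x) = (phi * phi) * x" by (simp add: mult.assoc)
  also have "\<dots> = (phi + 1) * x" using phi_sq by (simp add: power2_eq_square)
  finally show ?thesis by (simp add: algebra_simps)
qed
lemma phi_id: "x * phi * (phi - 1) = x" using pp[of x] by (simp add: algebra_simps)
lemma phi_id2: "x * (phi + 1) * (2 - phi) = x" using pp[of x] by (simp add: algebra_simps)

lemma irr2: fixes n m :: int assumes "n \<noteq> 0" shows "of_int n * (phi - 1) \<noteq> of_int m"
proof
  assume "of_int n * (phi - 1) = of_int m"
  hence "of_int n * phi = of_int (m + n)" by (simp add: algebra_simps)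
  thus False using irr[OF assms] by blast
qed

lemma wa_bounds: assumes "n \<ge> 1"
  shows "of_int (wa n) < real n * phi" "real n * phi < of_int (wa n) + 1"
proof -
  have "of_int (wa n) \<le> real n * phi" unfolding wa_def by linarith
  moreover have "of_int (int n) * phi \<noteq> of_int (wa n)" using irr[of "int n"] assms by simp
  ultimately show "of_int (wa n) < real n * phi" by simp
  show "real n * phi < of_int (wa n) + 1" unfolding wa_def by linarith
qed

lemma wa_pos: assumes "n \<ge> 1" shows "wa n \<ge> 1"
proof -
  have "real n * phi \<ge> 1 * phi" using assms phi_gt1 by (intro mult_right_mono) auto
  hence "1 \<le> real n * phi" using phi_gt1 by linarith
  thus ?thesis using phi_gt1 unfolding wa_def by (simp add: le_floor_iff)
qed

lemma wa_mono: assumes "n < k" shows "wa n < wa k"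
proof -
  have "real k * phi - real n * phi = real (k - n) * phi" using assms by (simp add: algebra_simps of_nat_diff)
  also have "\<dots> \<ge> 1 * phi" using assms phi_gt1 by (intro mult_right_mono) auto
  finally have "real k * phi \<ge> real n * phi + 1" using phi_gt1 by simp
  thus ?thesis unfolding wa_def by linarith
qed

lemma wa_wa: assumes "n \<ge> 1" shows "wa (nat (wa n)) = wa n + int n - 1"
proof -
  define m where "m = wa n"
  have m1: "m \<ge> 1" using wa_pos[OF assms] m_def by simp
  have b1: "of_int m < real n * phi" and b2: "real n * phi < of_int m + 1" using wa_bounds[OF assms] m_def by auto
  have p: "phi - 1 > 0" "phi - 1 < 1" using phi_gt1 phi_lt2 by auto
  have "of_int m * (phi - 1) < real n * phi * (phi - 1)" using b1 p by (intro mult_strict_right_mono)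
  hence u: "of_int m * (phi - 1) < real n" using phi_id by simp
  have "real n * phi * (phi - 1) < (of_int m + 1) * (phi - 1)" using b2 p by (intro mult_strict_right_mono)
  hence "real n < (of_int m + 1) * (phi - 1)" using phi_id by simp
  hence "real n < of_int m * (phi - 1) + (phi - 1)" by (simp add: algebra_simps)
  hence l: "real n - 1 < of_int m * (phi - 1)" using p by linarith
  have "real (nat m) = of_int m" using m1 by simp
  hence "wa (nat m) = \<lfloor>of_int m * phi\<rfloor>" by (simp add: wa_def)
  also have "\<dots> = m + int n - 1"
    using u l by (intro floor_unique) (auto simp: algebra_simps)
  finally show ?thesis using m_def by simp
qed

lemma wa_b: assumes "n \<ge> 1" shows "wa (nat (wa n) + n) = 2 * wa n + int n"
proof -
  define m where "m = wa n"
  have m1: "m \<ge> 1" using wa_pos[OF assms] m_def by simp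
  have b1: "of_int m < real n * phi" and b2: "real n * phi < of_int m + 1" using wa_bounds[OF assms] m_def by auto
  define d where "d = real n * phi - of_int m"
  have d: "d > 0" "d < 1" using b1 b2 d_def by auto
  have p: "2 - phi > 0" "2 - phi < 1" using phi_gt1 phi_lt2 by auto
  have e: "(of_int m + real n) * phi = 2 * of_int m + real n + d * (2 - phi)"
    using phi_sq unfolding d_def by (simp add: algebra_simps pp)
  have q1: "d * (2 - phi) > 0" using d p by simp
  have "d * (2 - phi) < 1 * (2 - phi)" using d p by (intro mult_strict_right_mono)
  hence q2: "d * (2 - phi) < 1" using p by (simp only: mult_1)
  have "real (nat m + n) = of_int m + real n" using m1 by simp
  hence "wa (nat m + n) = \<lfloor>(of_int m + real n) * phi\<rfloor>" by (simp add: wa_def)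
  also have "\<dots> = 2 * m + int n" unfolding e using q1 q2 by (intro floor_unique) auto
  finally show ?thesis using m_def by simp
qed

lemma wa_disj: assumes "n \<ge> 1" "k \<ge> 1" shows "wa n \<noteq> wa k + int k"
proof
  assume h: "wa n = wa k + int k"
  define M where "M = wa n"
  have a1: "of_int M < real n * phi" "real n * phi < of_int M + 1" using wa_bounds[OF assms(1)] M_def by auto
  have k1: "of_int (wa k) < real k * phi" "real k * phi < of_int (wa k) + 1" using wa_bounds[OF assms(2)] by auto
  have a2: "of_int M < real k * (phi + 1)" "real k * (phi + 1) < of_int M + 1" using k1 h M_def by (auto simp: algebra_simps)
  have p: "phi - 1 > 0" "2 - phi > 0" using phi_gt1 phi_lt2 by auto
  have "of_int M * (phi - 1) < real n * phi * (phi - 1)" using a1 p by (intro mult_strict_right_mono) auto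
  hence c1: "of_int M * (phi - 1) < real n" using phi_id by simp
  have "real n * phi * (phi - 1) < (of_int M + 1) * (phi - 1)" using a1 p by (intro mult_strict_right_mono) auto
  hence c2: "real n < (of_int M + 1) * (phi - 1)" using phi_id by simp
  have "of_int M * (2 - phi) < real k * (phi + 1) * (2 - phi)" using a2 p by (intro mult_strict_right_mono) auto
  hence c3: "of_int M * (2 - phi) < real k" using phi_id2 by simp
  have "real k * (phi + 1) * (2 - phi) < (of_int M + 1) * (2 - phi)" using a2 p by (intro mult_strict_right_mono) auto
  hence c4: "real k < (of_int M + 1) * (2 - phi)" using phi_id2 by simp
  have "of_int M < real n + real k" using c1 c3 by (simp add: algebra_simps)
  moreover have "real n + real k < of_int M + 1" using c2 c4 by (simp add: algebra_simps)
  ultimately have "M < int n + int k" "int n + int k < M + 1" by linarith+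
  thus False by simp
qed

lemma wa_cover: fixes m :: int assumes "m \<ge> 1"
  shows "(\<exists>n\<ge>1. wa n = m) \<or> (\<exists>k\<ge>1. wa k + int k = m)"
proof -
  define n where "n = \<lfloor>(of_int m + 1) * (phi - 1)\<rfloor>"
  have p: "phi - 1 > 0" "phi - 1 < 1" "2 - phi > 0" using phi_gt1 phi_lt2 by auto
  have n1: "of_int n \<le> (of_int m + 1) * (phi - 1)" "(of_int m + 1) * (phi - 1) < of_int n + 1"
    unfolding n_def by linarith+
  have mpos: "of_int m * (phi - 1) > 0" using assms p by simp
  show ?thesis
  proof (cases "of_int n > of_int m * (phi - 1)")
    case True
    have n0: "n \<ge> 1" using True mpos by linarith
    have "of_int m * (phi - 1) * phi < of_int n * phi" using True phi_gt1 by (intro mult_strict_right_mono) auto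
    hence x1: "of_int m < of_int n * phi" using phi_id[of "of_int m"] by (simp add: algebra_simps)
    have "of_int n * phi \<le> (of_int m + 1) * (phi - 1) * phi" using n1 phi_gt1 by (intro mult_right_mono) auto
    hence "of_int n * phi \<le> of_int m + 1" using phi_id[of "of_int m + 1"] by (simp add: algebra_simps)
    moreover have "of_int n * phi \<noteq> of_int (m + 1)" using irr[of n "m+1"] n0 by simp
    ultimately have x2: "of_int n * phi < of_int m + 1" by simp
    have "real (nat n) = of_int n" using n0 by simp
    hence "wa (nat n) = m" unfolding wa_def using x1 x2 by (intro floor_unique) auto
    thus ?thesis using n0 by (intro disjI1 exI[of _ "nat n"]) auto
  next
    case False
    have "of_int m * (phi - 1) \<noteq> of_int n" using irr2[of m n] assms by simp
    hence y0: "of_int n < of_int m * (phi - 1)" using False by simp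
    have "of_int m * (phi - 1) < of_int m * 1" using p assms by (intro mult_strict_left_mono) auto
    hence "n < m" using y0 by linarith
    define k where "k = m - n"
    have k1: "k \<ge> 1" using \<open>n < m\<close> k_def by simp
    have "of_int k > of_int m * (2 - phi)" using y0 k_def by (simp add: algebra_simps)
    hence "of_int k * (phi + 1) > of_int m * (2 - phi) * (phi + 1)" using phi_gt1 by (intro mult_strict_right_mono) auto
    hence z1: "of_int k * (phi + 1) > of_int m" using phi_id2[of "of_int m"] by (simp add: algebra_simps)
    have "of_int k < (of_int m + 1) * (2 - phi)" using n1 k_def by (simp add: algebra_simps)
    hence "of_int k * (phi + 1) < (of_int m + 1) * (2 - phi) * (phi + 1)" using phi_gt1 by (intro mult_strict_right_mono) auto
    hence z2: "of_int k * (phi + 1) < of_int m + 1" using phi_id2[of "of_int m + 1"] by (simp add: algebra_simps)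
    have rk: "real (nat k) = of_int k" using k1 by simp
    have "wa (nat k) + int (nat k) = \<lfloor>of_int k * phi + of_int k\<rfloor>" unfolding wa_def rk using k1
      by simp
    also have "\<dots> = m" using z1 z2 by (intro floor_unique) (auto simp: algebra_simps)
    finally show ?thesis using k1 by (intro disjI2 exI[of _ "nat k"]) auto
  qed
qed


lemma f_mono: assumes "n < k" shows "f_ij i j n < f_ij i j k"
proof -
  have "wa n < wa k" using wa_mono[OF assms] .
  moreover have "fib (i+1) > 0" by (rule fib_neq_0_nat) simp
  ultimately have "int (fib (i + 1)) * wa n < int (fib (i + 1)) * wa k" by simp
  moreover have "int (fib i) * int n \<le> int (fib i) * int k" using assms by (intro mult_left_mono) auto
  ultimately show ?thesis unfolding f_ij_def by linarith
qed

lemma f_inj: "f_ij i j n = f_ij i j k \<Longrightarrow> n = k"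
  by (metis f_mono less_irrefl linorder_neqE_nat)

lemma f1: assumes "n \<ge> 1" shows "f_ij (i + 1) (int (fib (i + 1)) + j) n = f_ij i j (nat (wa n))"
proof -
  have h1: "fib (i + 2) = fib (i+1) + fib i" by (simp add: numeral_2_eq_2)
  have h2: "wa (nat (wa n)) = wa n + int n - 1" by (rule wa_wa[OF assms])
  have h3: "int (nat (wa n)) = wa n" using wa_pos[OF assms] by simp
  show ?thesis unfolding f_ij_def h2 h3 by (simp add: h1 algebra_simps)
qed

lemma f2: assumes "n \<ge> 1" shows "f_ij (i + 2) j n = f_ij i j (nat (wa n) + n)"
proof -
  have h1: "fib (i + 2) = fib (i+1) + fib i" by (simp add: numeral_2_eq_2)
  have h0: "fib (i + 2 + 1) = fib (i+2) + fib (i+1)" by (simp add: numeral_2_eq_2)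
  have h2: "wa (nat (wa n) + n) = 2 * wa n + int n" by (rule wa_b[OF assms])
  have h3: "int (nat (wa n)) = wa n" using wa_pos[OF assms] by simp
  show ?thesis unfolding f_ij_def h0 h2 of_nat_add h3 h1 by (simp add: algebra_simps)
qed

theorem theorem2p3:
  fixes i :: nat and j :: int
  shows "R_ij i j = R_ij (i + 1) (int (fib (i + 1)) + j) \<union> R_ij (i + 2) j
         \<and> R_ij (i + 1) (int (fib (i + 1)) + j) \<inter> R_ij (i + 2) j = {}"
proof (intro conjI)
  show "R_ij i j = R_ij (i + 1) (int (fib (i + 1)) + j) \<union> R_ij (i + 2) j"
  proof (intro equalityI subsetI)
    fix x assume "x \<in> R_ij i j"
    then obtain m where m: "m \<ge> 1" "x = f_ij i j m" unfolding R_ij_def by auto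
    have "int m \<ge> 1" using m by simp
    from wa_cover[OF this] show "x \<in> R_ij (i + 1) (int (fib (i + 1)) + j) \<union> R_ij (i + 2) j"
    proof
      assume "\<exists>n\<ge>1. wa n = int m"
      then obtain n where n: "n \<ge> 1" "wa n = int m" by auto
      hence "x = f_ij (i + 1) (int (fib (i + 1)) + j) n" using f1[OF n(1)] m by simp
      thus ?thesis using n unfolding R_ij_def by auto
    next
      assume "\<exists>k\<ge>1. wa k + int k = int m"
      then obtain n where n: "n \<ge> 1" "wa n + int n = int m" by auto
      hence "nat (wa n) + n = m" using wa_pos[OF n(1)] by linarith
      hence "x = f_ij (i + 2) j n" using f2[OF n(1)] m by simp
      thus ?thesis using n unfolding R_ij_def by auto
    qed
  next
    fix x assume "x \<in> R_ij (i + 1) (int (fib (i + 1)) + j) \<union> R_ij (i + 2) j"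
    then consider (a) n where "n \<ge> 1" "x = f_ij (i + 1) (int (fib (i + 1)) + j) n"
      | (b) n where "n \<ge> 1" "x = f_ij (i + 2) j n" unfolding R_ij_def by auto
    thus "x \<in> R_ij i j"
    proof cases
      case a
      have "nat (wa n) \<ge> 1" using wa_pos[OF a(1)] by simp
      thus ?thesis using f1[OF a(1)] a unfolding R_ij_def by auto
    next
      case b
      have "nat (wa n) + n \<ge> 1" using b by simp
      thus ?thesis using f2[OF b(1)] b unfolding R_ij_def by auto
    qed
  qed
next
  show "R_ij (i + 1) (int (fib (i + 1)) + j) \<inter> R_ij (i + 2) j = {}"
  proof (rule ccontr)
    assume "R_ij (i + 1) (int (fib (i + 1)) + j) \<inter> R_ij (i + 2) j \<noteq> {}"
    then obtain n k where nk: "n \<ge> 1" "k \<ge> 1"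
      "f_ij (i + 1) (int (fib (i + 1)) + j) n = f_ij (i + 2) j k" unfolding R_ij_def by auto
    hence "f_ij i j (nat (wa n)) = f_ij i j (nat (wa k) + k)" using f1 f2 by simp
    hence "nat (wa n) = nat (wa k) + k" by (rule f_inj)
    hence "wa n = wa k + int k" using wa_pos[OF nk(1)] wa_pos[OF nk(2)] by linarith
    thus False using wa_disj[OF nk(1,2)] by simp
  qed
qed

end
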